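(* Let $m\ge1$ and let $G$ be a strongly regular graph with parameters $P_+(m)$ or $P_-(m)$ and 2-rank $r$. Let $x$ be a vertex of $G$ and let $G'$ be obtained from $G$ by Seidel switching with respect to the set of neighbours of $x$, and let $G''$ be $G'$ with the (isolated) vertex $x$ deleted. Then $G''$ has 2-rank $r-2$ if $\mathbf{1}\in\mathrm{Col}_2(G)$, and 2-rank $r$ otherwise. (When $G''$ is strongly regular with parameters $P_0(m)$, this yields an SRG with parameters $P_0(m)$ of 2-rank $r-2$ or $r$ accordingly.)
   Context: $P_0(m)=(2^{2m}-1,2^{2m-1},2^{2m-2},2^{2m-2})$, $P_\pm(m)=(2^{2m},2^{2m-1}\pm2^{m-1},2^{2m-2}\pm2^{m-1},2^{2m-2}\pm2^{m-1})$. The 2-rank of a graph is the rank over $\mathbb{F}_2$ of its adjacency matrix; $\mathrm{Col}_2(G)$ is the $\mathbb{F}_2$-column space of the adjacency matrix of $G$, and $\mathbf{1}$ is the all-ones vector. Seidel switching with respect to a vertex set $X$ removes all edges between $X$ and its complement and adds all previously absent edges between $X$ and its complement, leaving other adjacencies unchanged. *)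

theory Defs
  imports Complex_Main "HOL-Library.Function_Algebras" "HOL-Library.Z2"
begin

definition simple_graph :: "'a set \<Rightarrow> ('a \<Rightarrow> 'a \<Rightarrow> bool) \<Rightarrow> bool" where
  "simple_graph V adj \<longleftrightarrow> finite V \<and> (\<forall>x y. adj x y \<longrightarrow> x \<in> V \<and> y \<in> V)
     \<and> (\<forall>x y. adj x y \<longrightarrow> adj y x) \<and> (\<forall>x. \<not> adj x x)"

definition nbrs :: "'a set \<Rightarrow> ('a \<Rightarrow> 'a \<Rightarrow> bool) \<Rightarrow> 'a \<Rightarrow> 'a set" where
  "nbrs V adj x = {y \<in> V. adj x y}"

definition srg :: "'a set \<Rightarrow> ('a \<Rightarrow> 'a \<Rightarrow> bool) \<Rightarrow> nat \<Rightarrow> nat \<Rightarrow> nat \<Rightarrow> nat \<Rightarrow> bool" where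
  "srg V adj v k l mu \<longleftrightarrow> simple_graph V adj \<and> card V = v
     \<and> (\<forall>x\<in>V. card (nbrs V adj x) = k)
     \<and> (\<forall>x\<in>V. \<forall>y\<in>V. adj x y \<longrightarrow> card (nbrs V adj x \<inter> nbrs V adj y) = l)
     \<and> (\<forall>x\<in>V. \<forall>y\<in>V. x \<noteq> y \<longrightarrow> \<not> adj x y \<longrightarrow> card (nbrs V adj x \<inter> nbrs V adj y) = mu)"

definition srg_P_plus :: "'a set \<Rightarrow> ('a \<Rightarrow> 'a \<Rightarrow> bool) \<Rightarrow> nat \<Rightarrow> bool" where
  "srg_P_plus V adj m \<longleftrightarrow> srg V adj (2^(2*m)) (2^(2*m-1) + 2^(m-1))
      (2^(2*m-2) + 2^(m-1)) (2^(2*m-2) + 2^(m-1))"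

definition srg_P_minus :: "'a set \<Rightarrow> ('a \<Rightarrow> 'a \<Rightarrow> bool) \<Rightarrow> nat \<Rightarrow> bool" where
  "srg_P_minus V adj m \<longleftrightarrow> srg V adj (2^(2*m)) (2^(2*m-1) - 2^(m-1))
      (2^(2*m-2) - 2^(m-1)) (2^(2*m-2) - 2^(m-1))"

definition srg_P_zero :: "'a set \<Rightarrow> ('a \<Rightarrow> 'a \<Rightarrow> bool) \<Rightarrow> nat \<Rightarrow> bool" where
  "srg_P_zero V adj m \<longleftrightarrow> srg V adj (2^(2*m) - 1) (2^(2*m-1)) (2^(2*m-2)) (2^(2*m-2))"

text \<open>Vectors over GF(2) indexed by vertices: functions 'a \<Rightarrow> bit (zero outside V).\<close>
definition f2scale :: "bit \<Rightarrow> ('a \<Rightarrow> bit) \<Rightarrow> ('a \<Rightarrow> bit)" where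
  "f2scale c f = (\<lambda>x. c * f x)"

definition adj_col :: "'a set \<Rightarrow> ('a \<Rightarrow> 'a \<Rightarrow> bool) \<Rightarrow> 'a \<Rightarrow> ('a \<Rightarrow> bit)" where
  "adj_col V adj y = (\<lambda>x. if x \<in> V \<and> y \<in> V \<and> adj x y then 1 else 0)"

definition Col2 :: "'a set \<Rightarrow> ('a \<Rightarrow> 'a \<Rightarrow> bool) \<Rightarrow> ('a \<Rightarrow> bit) set" where
  "Col2 V adj = module.span f2scale (adj_col V adj ` V)"

definition rank2 :: "'a set \<Rightarrow> ('a \<Rightarrow> 'a \<Rightarrow> bool) \<Rightarrow> nat" where
  "rank2 V adj = vector_space.dim f2scale (Col2 V adj)"

definition ones :: "'a set \<Rightarrow> ('a \<Rightarrow> bit)" where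
  "ones V = (\<lambda>x. if x \<in> V then 1 else 0)"

definition seidel_switch :: "'a set \<Rightarrow> ('a \<Rightarrow> 'a \<Rightarrow> bool) \<Rightarrow> 'a set \<Rightarrow> 'a \<Rightarrow> 'a \<Rightarrow> bool" where
  "seidel_switch V adj X x y \<longleftrightarrow> x \<in> V \<and> y \<in> V \<and> x \<noteq> y \<and>
     (if (x \<in> X) = (y \<in> X) then adj x y else \<not> adj x y)"

definition induced :: "'a set \<Rightarrow> ('a \<Rightarrow> 'a \<Rightarrow> bool) \<Rightarrow> 'a \<Rightarrow> 'a \<Rightarrow> bool" where
  "induced W adj x y \<longleftrightarrow> x \<in> W \<and> y \<in> W \<and> adj x y"

end

theory Submission
  imports Defs
begin


declare add_bit_eq_xor[simp del] mult_bit_eq_and[simp del]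

lemma bit_add_self[simp]: "(b::bit) + b = 0"
  by (cases b) simp_all

lemma sum_fun_apply: "(sum f A) u = (\<Sum>a\<in>A. f a u)"
  by (induction A rule: infinite_finite_induct) auto

interpretation F: vector_space f2scale
  by unfold_locales (auto simp: f2scale_def fun_eq_iff algebra_simps)

interpretation B: vector_space "(*) :: bit \<Rightarrow> bit \<Rightarrow> bit"
  by unfold_locales (auto simp: algebra_simps)

interpretation FB: vector_space_pair f2scale "(*) :: bit \<Rightarrow> bit \<Rightarrow> bit" ..

lemma f2scale_apply[simp]: "f2scale c f u = c * f u"
  by (simp add: f2scale_def)

lemma if_mult_bit: "(if P then 1 else 0) * (t::bit) = (if P then t else 0)"
  by simp

lemma mult_if_bit: "(t::bit) * (if P then 1 else 0) = (if P then t else 0)"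
  by simp

lemma subspace_lc: "F.subspace (range (\<lambda>c. (\<lambda>u. \<Sum>v\<in>V. c v * g v u)))"
proof (rule F.subspaceI)
  show "0 \<in> range (\<lambda>c. (\<lambda>u. \<Sum>v\<in>V. c v * g v u))"
    by (rule image_eqI[of _ _ "\<lambda>_. 0"]) (auto simp: fun_eq_iff)
next
  fix x y assume "x \<in> range (\<lambda>c. (\<lambda>u. \<Sum>v\<in>V. c v * g v u))" "y \<in> range (\<lambda>c. (\<lambda>u. \<Sum>v\<in>V. c v * g v u))"
  then obtain c d where "x = (\<lambda>u. \<Sum>v\<in>V. c v * g v u)" "y = (\<lambda>u. \<Sum>v\<in>V. d v * g v u)" by auto
  then show "x + y \<in> range (\<lambda>c. (\<lambda>u. \<Sum>v\<in>V. c v * g v u))"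
    by (intro image_eqI[of _ _ "\<lambda>v. c v + d v"]) (simp_all only: plus_fun_def distrib_right sum.distrib UNIV_I)
next
  fix k x assume "x \<in> range (\<lambda>c. (\<lambda>u. \<Sum>v\<in>V. c v * g v u))"
  then obtain c where "x = (\<lambda>u. \<Sum>v\<in>V. c v * g v u)" by auto
  then show "f2scale k x \<in> range (\<lambda>c. (\<lambda>u. \<Sum>v\<in>V. c v * g v u))"
    by (intro image_eqI[of _ _ "\<lambda>v. k * c v"]) (simp_all only: f2scale_def sum_distrib_left mult.assoc UNIV_I)
qed

lemma span_lc:
  assumes "finite V"
  shows "F.span (g ` V) = range (\<lambda>c. (\<lambda>u. \<Sum>v\<in>V. c v * g v u))"
proof
  show "F.span (g ` V) \<subseteq> range (\<lambda>c. (\<lambda>u. \<Sum>v\<in>V. c v * g v u))"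
  proof (rule F.span_minimal[OF _ subspace_lc], clarify)
    fix y assume y: "y \<in> V"
    show "g y \<in> range (\<lambda>c. (\<lambda>u. \<Sum>v\<in>V. c v * g v u))"
      by (rule image_eqI[of _ _ "\<lambda>v. if v = y then 1 else 0"])
         (simp_all only: if_mult_bit sum.delta assms y if_True UNIV_I)
  qed
next
  show "range (\<lambda>c. (\<lambda>u. \<Sum>v\<in>V. c v * g v u)) \<subseteq> F.span (g ` V)"
  proof clarify
    fix c
    have "(\<lambda>u. \<Sum>v\<in>V. c v * g v u) = (\<Sum>v\<in>V. f2scale (c v) (g v))"
      by (simp add: fun_eq_iff sum_fun_apply)
    also have "\<dots> \<in> F.span (g ` V)"
      by (intro F.span_sum F.span_scale F.span_base) auto
    finally show "(\<lambda>u. \<Sum>v\<in>V. c v * g v u) \<in> F.span (g ` V)" .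
  qed
qed

lemma dim_insert_notin:
  assumes "finite S" "v \<notin> F.span S"
  shows "F.dim (F.span (insert v S)) = Suc (F.dim (F.span S))"
proof -
  obtain B where B: "B \<subseteq> S" "F.independent B" "S \<subseteq> F.span B"
    by (rule F.maximal_independent_subset)
  have fB: "finite B" using B(1) assms(1) finite_subset by blast
  have spB: "F.span B = F.span S"
    using B F.span_eq F.span_superset by (metis F.span_mono subset_trans)
  have vB: "v \<notin> F.span B" using spB assms(2) by simp
  have ind: "F.independent (insert v B)" by (rule F.independent_insertI[OF vB B(2)])
  have sp2: "F.span (insert v B) = F.span (insert v S)"
    using spB by (metis F.span_insert)
  have vnB: "v \<notin> B" using vB F.span_superset by blast
  have "F.dim (F.span (insert v S)) = card (insert v B)"
    using sp2 F.dim_span_eq_card_independent[OF ind] by simp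
  also have "\<dots> = Suc (card B)" using fB vnB by simp
  also have "card B = F.dim (F.span S)"
    using spB F.dim_span_eq_card_independent[OF B(2)] by simp
  finally show ?thesis .
qed

lemma alt_sum:
  fixes M :: "'a \<Rightarrow> 'a \<Rightarrow> bit"
  assumes "finite V" "\<And>u v. M u v = M v u" "\<And>u. M u u = 0"
  shows "(\<Sum>u\<in>V. \<Sum>v\<in>V. c u * c v * M u v) = 0"
  using assms(1)
proof (induction V rule: finite_induct)
  case empty
  then show ?case by simp
next
  case (insert w V)
  have sym: "(\<Sum>u\<in>V. c u * c w * M u w) = (\<Sum>v\<in>V. c w * c v * M w v)"
    by (intro sum.cong refl) (metis assms(2) mult.commute)
  have "(\<Sum>u\<in>insert w V. \<Sum>v\<in>insert w V. c u * c v * M u v)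
      = (c w * c w * M w w + (\<Sum>u\<in>V. c u * c w * M u w))
        + ((\<Sum>v\<in>V. c w * c v * M w v) + (\<Sum>u\<in>V. \<Sum>v\<in>V. c u * c v * M u v))"
    by (simp only: sum.insert[OF insert.hyps] sum.distrib)
  also have "\<dots> = 0"
    by (simp only: sym assms(3) insert.IH mult_zero_right add_0 add_0_right bit_add_self)
  finally show ?case .
qed

lemma odd_dep:
  fixes g :: "'a \<Rightarrow> 'a \<Rightarrow> bit"
  assumes fin: "finite V" and sym: "\<And>u v. g v u = g u v"
    and supp: "\<And>u v. u \<notin> V \<Longrightarrow> g v u = 0"
    and nodep: "\<not> (\<exists>c. (\<lambda>u. \<Sum>v\<in>V. c v * g v u) = 0 \<and> (\<Sum>v\<in>V. c v) = 1)"
  shows "ones V \<in> F.span (g ` V)"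
proof -
  obtain B where B: "B \<subseteq> g ` V" "F.independent B" "g ` V \<subseteq> F.span B"
    by (rule F.maximal_independent_subset)
  have fB: "finite B" using B(1) fin finite_subset by blast
  obtain h where h: "Vector_Spaces.linear f2scale (*) h" "\<forall>b\<in>B. h b = (1::bit)"
    using FB.linear_independent_extend[OF B(2), of "\<lambda>_. 1"] by blast
  define r where "r = (\<lambda>b. inv_into V g b)"
  have r: "\<And>b. b \<in> B \<Longrightarrow> r b \<in> V \<and> g (r b) = b"
    using B(1) unfolding r_def by (auto intro: inv_into_into f_inv_into_f)
  have hg: "h (g y) = 1" if y: "y \<in> V" for y
  proof -
    have "g y \<in> F.span B" using B(3) y by blast
    then obtain d where d: "g y = (\<Sum>b\<in>B. f2scale (d b) b)"
      using F.span_finite[OF fB] by auto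
    define c where "c = (\<lambda>v. (\<Sum>b\<in>{b. b \<in> B \<and> r b = v}. d b) + (if v = y then 1 else 0))"
    have grp: "(\<Sum>v\<in>V. \<Sum>b\<in>{b. b \<in> B \<and> r b = v}. k b) = (\<Sum>b\<in>B. k b)" for k :: "('a \<Rightarrow> bit) \<Rightarrow> bit"
      by (rule sum.group[OF fB fin]) (use r in blast)
    have "(\<lambda>u. \<Sum>v\<in>V. c v * g v u) = 0"
    proof
      fix u
      have "(\<Sum>v\<in>V. c v * g v u)
         = (\<Sum>v\<in>V. \<Sum>b\<in>{b. b \<in> B \<and> r b = v}. d b * g v u) + (\<Sum>v\<in>V. (if v = y then 1 else 0) * g v u)"
        unfolding c_def by (simp add: distrib_right sum.distrib sum_distrib_right)
      also have "(\<Sum>v\<in>V. \<Sum>b\<in>{b. b \<in> B \<and> r b = v}. d b * g v u) = (\<Sum>v\<in>V. \<Sum>b\<in>{b. b \<in> B \<and> r b = v}. d b * b u)"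
        using r by (intro sum.cong refl) auto
      also have "\<dots> = (\<Sum>b\<in>B. d b * b u)" by (rule grp)
      also have "\<dots> = g y u" using d by (simp add: sum_fun_apply)
      also have "(\<Sum>v\<in>V. (if v = y then 1 else 0) * g v u) = g y u"
        by (simp only: if_mult_bit sum.delta fin y if_True)
      finally show "(\<Sum>v\<in>V. c v * g v u) = 0 u" by simp
    qed
    then have "(\<Sum>v\<in>V. c v) \<noteq> 1" using nodep by blast
    moreover have "(\<Sum>v\<in>V. c v) = (\<Sum>b\<in>B. d b) + 1"
      unfolding c_def by (simp add: sum.distrib grp fin y)
    ultimately have "(\<Sum>b\<in>B. d b) = 1"
      by (cases "(\<Sum>b\<in>B. d b)") simp_all
    have "h (g y) = h (\<Sum>b\<in>B. f2scale (d b) b)" using d by simp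
    also have "\<dots> = (\<Sum>b\<in>B. d b * h b)"
      by (simp only: FB.linear_sum[OF h(1)] FB.linear_scale[OF h(1)])
    also have "\<dots> = (\<Sum>b\<in>B. d b)" using h(2) by simp
    finally show ?thesis using \<open>(\<Sum>b\<in>B. d b) = 1\<close> by simp
  qed
  define z where "z = (\<lambda>v. h (\<lambda>u. if u = v then 1 else 0))"
  have hw: "h w = (\<Sum>v\<in>V. w v * z v)" if w: "\<And>u. u \<notin> V \<Longrightarrow> w u = 0" for w
  proof -
    have "w = (\<Sum>v\<in>V. f2scale (w v) (\<lambda>u. if u = v then 1 else 0))"
    proof
      fix u
      have "(\<Sum>v\<in>V. f2scale (w v) (\<lambda>u. if u = v then 1 else 0)) u = (\<Sum>v\<in>V. if u = v then w v else 0)"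
        by (simp add: sum_fun_apply mult_if_bit eq_commute)
      also have "\<dots> = w u" using fin w by (auto simp: sum.delta)
      finally show "w u = (\<Sum>v\<in>V. f2scale (w v) (\<lambda>u. if u = v then 1 else 0)) u" by simp
    qed
    then have "h w = h (\<Sum>v\<in>V. f2scale (w v) (\<lambda>u. if u = v then 1 else 0))" by simp
    also have "\<dots> = (\<Sum>v\<in>V. w v * z v)"
      by (simp only: FB.linear_sum[OF h(1)] FB.linear_scale[OF h(1)] z_def)
    finally show ?thesis .
  qed
  have "ones V = (\<lambda>u. \<Sum>v\<in>V. z v * g v u)"
  proof
    fix u
    show "ones V u = (\<Sum>v\<in>V. z v * g v u)"
    proof (cases "u \<in> V")
      case True
      have "(\<Sum>v\<in>V. z v * g v u) = (\<Sum>v\<in>V. g u v * z v)"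
        by (intro sum.cong refl) (simp add: sym mult.commute)
      also have "\<dots> = h (g u)" by (rule hw[symmetric]) (rule supp)
      also have "\<dots> = 1" by (rule hg[OF True])
      finally show ?thesis using True by (simp add: ones_def)
    next
      case False
      then show ?thesis by (simp add: ones_def supp)
    qed
  qed
  then show ?thesis using span_lc[OF fin, of g] by auto
qed

lemma sg_facts:
  assumes "simple_graph V adj"
  shows "finite V" "\<And>u v. adj_col V adj v u = adj_col V adj u v"
    "\<And>u v. u \<notin> V \<Longrightarrow> adj_col V adj v u = 0" "\<And>u. adj_col V adj u u = 0"
  using assms by (auto simp: simple_graph_def adj_col_def)

lemma b_formula:
  assumes sg: "simple_graph V adj" and x: "x \<in> V" and y: "y \<in> V - {x}"
  shows "adj_col (V - {x}) (induced (V - {x}) (seidel_switch V adj (nbrs V adj x))) y u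
     = adj_col V adj y u + adj_col V adj x u + adj_col V adj y x * ones V u"
  using sg x y
  by (auto simp: adj_col_def induced_def seidel_switch_def nbrs_def ones_def simple_graph_def)



lemma bit_solve: "(p::bit) = q + r + s \<Longrightarrow> q = p + r + s"
  by (cases p; cases q; cases r; cases s) simp_all

lemma vanish_span:
  assumes "\<And>g. g \<in> S \<Longrightarrow> g x = 0" "w \<in> F.span S"
  shows "w x = 0"
proof -
  have sub: "F.subspace {w. w x = (0::bit)}"
    by (rule F.subspaceI) auto
  have "F.span S \<subseteq> {w. w x = 0}"
    by (rule F.span_minimal[OF _ sub]) (use assms(1) in auto)
  then show ?thesis using assms(2) by auto
qed

lemma case1:
  assumes sg: "simple_graph V adj" and x: "x \<in> V"
    and one: "ones V \<in> F.span (adj_col V adj ` V)"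
  shows "F.dim (F.span (adj_col V adj ` V))
    = F.dim (F.span (adj_col (V - {x}) (induced (V - {x}) (seidel_switch V adj (nbrs V adj x))) ` (V - {x}))) + 2"
proof -
  let ?a = "adj_col V adj"
  let ?b = "adj_col (V - {x}) (induced (V - {x}) (seidel_switch V adj (nbrs V adj x)))"
  note f = sg_facts[OF sg]
  have bf: "\<And>y u. y \<in> V - {x} \<Longrightarrow> ?b y u = ?a y u + ?a x u + ?a y x * ones V u"
    by (rule b_formula[OF sg x])
  have af: "?a y = ?b y + ?a x + f2scale (?a y x) (ones V)" if "y \<in> V - {x}" for y
  proof
    fix u
    have "?a y u = ?b y u + ?a x u + ?a y x * ones V u" by (rule bit_solve[OF bf[OF that]])
    then show "?a y u = (?b y + ?a x + f2scale (?a y x) (ones V)) u"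
      by (simp only: plus_fun_apply f2scale_apply)
  qed
  obtain c where c: "ones V = (\<lambda>u. \<Sum>v\<in>V. c v * ?a v u)"
    using one span_lc[OF f(1), of ?a] by auto
  define \<phi> where "\<phi> = (\<lambda>w. \<Sum>v\<in>V. c v * w v)"
  have \<phi>add: "\<phi> (w1 + w2) = \<phi> w1 + \<phi> w2" for w1 w2
    by (simp add: \<phi>_def distrib_left sum.distrib)
  have \<phi>scale: "\<phi> (f2scale k w) = k * \<phi> w" for k w
    unfolding \<phi>_def f2scale_apply sum_distrib_left by (rule sum.cong) (simp_all add: mult.left_commute)
  have \<phi>a: "\<phi> (?a y) = 1" if "y \<in> V" for y
  proof -
    have "\<phi> (?a y) = (\<Sum>v\<in>V. c v * ?a v y)"
      unfolding \<phi>_def by (intro sum.cong refl) (simp add: f(2))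
    also have "\<dots> = ones V y" by (simp add: c)
    finally show ?thesis using that by (simp add: ones_def)
  qed
  have \<phi>1: "\<phi> (ones V) = 0"
  proof -
    have "\<phi> (ones V) = (\<Sum>v\<in>V. c v * (\<Sum>u\<in>V. c u * ?a u v))"
      unfolding \<phi>_def by (simp only: c)
    also have "\<dots> = (\<Sum>v\<in>V. \<Sum>u\<in>V. c v * c u * ?a u v)"
      by (simp only: sum_distrib_left mult.assoc)
    also have "\<dots> = 0"
      by (rule alt_sum[OF f(1), where M = "\<lambda>p q. ?a q p"]) (simp_all add: f(2) f(4))
    finally show ?thesis .
  qed
  have \<phi>b: "\<phi> (?b y) = 0" if "y \<in> V - {x}" for y
  proof -
    have "?b y = ?a y + ?a x + f2scale (?a y x) (ones V)"
      by (rule ext) (simp only: bf[OF that] plus_fun_apply f2scale_apply)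
    then have "\<phi> (?b y) = \<phi> (?a y) + \<phi> (?a x) + ?a y x * \<phi> (ones V)"
      by (simp only: \<phi>add \<phi>scale)
    also have "\<dots> = 0"
      using that x by (simp only: \<phi>a \<phi>1 mult_zero_right add_0_right bit_add_self Diff_iff)
    finally show ?thesis .
  qed
  have sub: "F.subspace {w. \<phi> w = 0}"
    by (rule F.subspaceI) (auto simp: \<phi>add \<phi>scale, simp add: \<phi>_def)
  have "F.span (?b ` (V - {x})) \<subseteq> {w. \<phi> w = 0}"
    by (rule F.span_minimal[OF _ sub]) (use \<phi>b in auto)
  then have ax: "?a x \<notin> F.span (?b ` (V - {x}))" using \<phi>a[OF x] by auto
  have ox: "ones V \<notin> F.span (insert (?a x) (?b ` (V - {x})))"
  proof
    assume "ones V \<in> F.span (insert (?a x) (?b ` (V - {x})))"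
    then have "ones V x = 0"
      by (rule vanish_span[rotated]) (use sg in \<open>auto simp: adj_col_def simple_graph_def\<close>)
    then show False using x by (simp add: ones_def)
  qed
  have speq: "F.span (?a ` V) = F.span (insert (ones V) (insert (?a x) (?b ` (V - {x}))))"
    unfolding F.span_eq
  proof
    show "?a ` V \<subseteq> F.span (insert (ones V) (insert (?a x) (?b ` (V - {x}))))"
    proof clarify
      fix y assume y: "y \<in> V"
      show "?a y \<in> F.span (insert (ones V) (insert (?a x) (?b ` (V - {x}))))"
      proof (cases "y = x")
        case True then show ?thesis unfolding True by (intro F.span_base insertI2 insertI1)
      next
        case False
        then have y': "y \<in> V - {x}" using y by simp
        show ?thesis
          by (subst af[OF y'], intro F.span_add F.span_scale F.span_base insertI1 insertI2 imageI y')
      qed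
    qed
  next
    show "insert (ones V) (insert (?a x) (?b ` (V - {x}))) \<subseteq> F.span (?a ` V)"
    proof clarify
      fix w assume "w \<in> insert (ones V) (insert (?a x) (?b ` (V - {x})))"
      then consider "w = ones V" | "w = ?a x" | y where "y \<in> V - {x}" "w = ?b y" by blast
      then show "w \<in> F.span (?a ` V)"
      proof cases
        case 1 show ?thesis unfolding 1 by (rule one)
      next
        case 2 show ?thesis unfolding 2 by (intro F.span_base imageI x)
      next
        case 3
        then have "w = ?a y + ?a x + f2scale (?a y x) (ones V)"
          by (intro ext) (simp only: 3(2) bf[OF 3(1)] plus_fun_apply f2scale_apply)
        moreover have "?a y + ?a x + f2scale (?a y x) (ones V) \<in> F.span (?a ` V)"
          by (rule F.span_add[OF F.span_add[OF F.span_base[OF imageI] F.span_base[OF imageI[OF x]]] F.span_scale[OF one]])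
             (use 3(1) in blast)
        ultimately show ?thesis by (simp only:)
      qed
    qed
  qed
  have fb: "finite (?b ` (V - {x}))" using f(1) by simp
  have d1: "F.dim (F.span (insert (ones V) (insert (?a x) (?b ` (V - {x})))))
     = Suc (F.dim (F.span (insert (?a x) (?b ` (V - {x})))))"
    by (rule dim_insert_notin[OF finite.insertI[OF fb] ox])
  have d2: "F.dim (F.span (insert (?a x) (?b ` (V - {x})))) = Suc (F.dim (F.span (?b ` (V - {x}))))"
    by (rule dim_insert_notin[OF fb ax])
  show ?thesis
    unfolding speq d1 d2 by simp
qed

lemma case2:
  assumes sg: "simple_graph V adj" and x: "x \<in> V"
    and notone: "ones V \<notin> F.span (adj_col V adj ` V)"
  shows "F.dim (F.span (adj_col (V - {x}) (induced (V - {x}) (seidel_switch V adj (nbrs V adj x))) ` (V - {x})))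
    = F.dim (F.span (adj_col V adj ` V))"
proof -
  let ?a = "adj_col V adj"
  let ?b = "adj_col (V - {x}) (induced (V - {x}) (seidel_switch V adj (nbrs V adj x)))"
  note f = sg_facts[OF sg]
  have bf: "\<And>y u. y \<in> V - {x} \<Longrightarrow> ?b y u = ?a y u + ?a x u + ?a y x * ones V u"
    by (rule b_formula[OF sg x])
  have bfun: "?b y = ?a y + ?a x + f2scale (?a y x) (ones V)" if "y \<in> V - {x}" for y
    by (rule ext) (simp only: bf[OF that] plus_fun_apply f2scale_apply)
  have af: "?a y = ?b y + ?a x + f2scale (?a y x) (ones V)" if "y \<in> V - {x}" for y
  proof
    fix u
    have "?a y u = ?b y u + ?a x u + ?a y x * ones V u" by (rule bit_solve[OF bf[OF that]])
    then show "?a y u = (?b y + ?a x + f2scale (?a y x) (ones V)) u"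
      by (simp only: plus_fun_apply f2scale_apply)
  qed
  obtain c where c0: "(\<lambda>u. \<Sum>v\<in>V. c v * ?a v u) = 0" and c1: "(\<Sum>v\<in>V. c v) = 1"
    using odd_dep[of V "adj_col V adj", OF f(1) f(2) f(3)] notone by blast
  have c0': "(\<Sum>v\<in>V. c v * ?a v u) = 0" for u
    using fun_cong[OF c0, of u] by simp
  have fin': "finite (V - {x})" using f(1) by simp
  have "?a x = (\<lambda>u. \<Sum>v\<in>V - {x}. c v * ?b v u)"
  proof
    fix u
    have "(\<Sum>v\<in>V - {x}. c v * ?b v u) = (\<Sum>v\<in>V - {x}. c v * (?a v u + ?a x u + ?a v x * ones V u))"
      by (rule sum.cong[OF refl]) (simp only: bf)
    also have "\<dots> = c x * (?a x u + ?a x u + ?a x x * ones V u) + (\<Sum>v\<in>V - {x}. c v * (?a v u + ?a x u + ?a v x * ones V u))"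
      by (simp only: f(4) bit_add_self mult_zero_left add_0 mult_zero_right)
    also have "\<dots> = (\<Sum>v\<in>V. c v * (?a v u + ?a x u + ?a v x * ones V u))"
      by (rule sum.remove[OF f(1) x, symmetric])
    also have "\<dots> = (\<Sum>v\<in>V. c v * ?a v u) + (\<Sum>v\<in>V. c v) * ?a x u + (\<Sum>v\<in>V. c v * ?a v x) * ones V u"
      by (simp only: distrib_left sum.distrib sum_distrib_right mult.assoc)
    also have "\<dots> = ?a x u"
      by (simp only: c0' c1 add_0 mult_1 mult_zero_left add_0_right)
    finally show "?a x u = (\<Sum>v\<in>V - {x}. c v * ?b v u)" by (rule sym)
  qed
  also have "\<dots> \<in> F.span (?b ` (V - {x}))"
    using span_lc[OF fin', of ?b] by blast
  finally have axspan: "?a x \<in> F.span (?b ` (V - {x}))" .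
  have speq: "F.span (insert (ones V) (?a ` V)) = F.span (insert (ones V) (?b ` (V - {x})))"
    unfolding F.span_eq
  proof
    show "insert (ones V) (?a ` V) \<subseteq> F.span (insert (ones V) (?b ` (V - {x})))"
    proof clarify
      fix w assume "w \<in> insert (ones V) (?a ` V)"
      then consider "w = ones V" | y where "y \<in> V" "w = ?a y" by blast
      then show "w \<in> F.span (insert (ones V) (?b ` (V - {x})))"
      proof cases
        case 1 show ?thesis unfolding 1 by (intro F.span_base insertI1)
      next
        case 2
        show ?thesis
        proof (cases "y = x")
          case True
          show ?thesis unfolding 2 True
            by (rule subsetD[OF F.span_mono[OF subset_insertI] axspan])
        next
          case False
          then have y': "y \<in> V - {x}" using 2 by simp
          show ?thesis unfolding 2
            by (subst af[OF y'], rule F.span_add[OF F.span_add[OF F.span_base subsetD[OF F.span_mono[OF subset_insertI] axspan]] F.span_scale[OF F.span_base]])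
               (use y' in blast)+
        qed
      qed
    qed
  next
    show "insert (ones V) (?b ` (V - {x})) \<subseteq> F.span (insert (ones V) (?a ` V))"
    proof clarify
      fix w assume "w \<in> insert (ones V) (?b ` (V - {x}))"
      then consider "w = ones V" | y where "y \<in> V - {x}" "w = ?b y" by blast
      then show "w \<in> F.span (insert (ones V) (?a ` V))"
      proof cases
        case 1 show ?thesis unfolding 1 by (intro F.span_base insertI1)
      next
        case 2
        show ?thesis unfolding 2 bfun[OF 2(1)]
          by (rule F.span_add[OF F.span_add[OF F.span_base F.span_base] F.span_scale[OF F.span_base]])
             (use 2(1) x in blast)+
      qed
    qed
  qed
  have ob: "ones V \<notin> F.span (?b ` (V - {x}))"
  proof
    assume "ones V \<in> F.span (?b ` (V - {x}))"
    then have "ones V x = 0"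
      by (rule vanish_span[rotated]) (auto simp: adj_col_def)
    then show False using x by (simp add: ones_def)
  qed
  have d1: "F.dim (F.span (insert (ones V) (?b ` (V - {x})))) = Suc (F.dim (F.span (?b ` (V - {x}))))"
    by (rule dim_insert_notin[OF finite_imageI[OF fin'] ob])
  have d2: "F.dim (F.span (insert (ones V) (?a ` V))) = Suc (F.dim (F.span (?a ` V)))"
    by (rule dim_insert_notin[OF finite_imageI[OF f(1)] notone])
  show ?thesis using d1 d2 speq by simp
qed

theorem mainTheorem8:
  fixes V :: "'a set" and adj :: "'a \<Rightarrow> 'a \<Rightarrow> bool" and m :: nat and x :: 'a
  assumes "m \<ge> 1"
    and "srg_P_plus V adj m \<or> srg_P_minus V adj m"
    and "x \<in> V"
  shows "let r = rank2 V adj;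
             V'' = V - {x};
             adj'' = induced V'' (seidel_switch V adj (nbrs V adj x))
         in (if ones V \<in> Col2 V adj then rank2 V'' adj'' + 2 = r
             else rank2 V'' adj'' = r)"
proof -
  have sg: "simple_graph V adj"
    using assms(2) by (auto simp: srg_P_plus_def srg_P_minus_def srg_def)
  show ?thesis
    unfolding Let_def rank2_def Col2_def
    using case1[OF sg assms(3)] case2[OF sg assms(3)] by simp
qed

end
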